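(* Let $\beta<2$ and set $h(\xi,\alpha)=\sqrt{\xi^2-\beta\xi^4+\xi^6}+\alpha\xi$ for $\xi,\alpha\in\mathbb R$. (i) If $\beta\neq0$, there is $C>0$ such that $\sup_{\alpha\in\mathbb R}\big|\int_{\mathbb R}e^{ith(\xi,\alpha)}\,d\xi\big|\le Ct^{-1/3}$ for all $t>0$. (ii) If $\beta=0$, there is $C>0$ such that $\sup_{\alpha\in\mathbb R}\big|\int_{\mathbb R}e^{ith(\xi,\alpha)}\,d\xi\big|\le C(t^{-1/3}+t^{-1/5})$ for all $t>0$.
   Context: The integrals are oscillatory improper integrals over $\mathbb R$. *)

theory Defs
  imports "HOL-Analysis.Analysis"
begin

definition phase :: "real \<Rightarrow> real \<Rightarrow> real \<Rightarrow> real" where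
  "phase \<beta> \<xi> \<alpha> = sqrt (\<xi>^2 - \<beta> * \<xi>^4 + \<xi>^6) + \<alpha> * \<xi>"

definition has_improper_integral_R :: "(real \<Rightarrow> complex) \<Rightarrow> complex \<Rightarrow> bool" where
  "has_improper_integral_R f I \<longleftrightarrow>
     (\<forall>a b. f integrable_on {a..b}) \<and>
     ((\<lambda>(a, b). integral {a..b} f) \<longlongrightarrow> I) (at_bot \<times>\<^sub>F at_top)"

end

theory Submission
  imports Defs
begin


lemma cauchy_at_top_conv:
  fixes F :: "real \<Rightarrow> complex"
  assumes "\<And>e. e>0 \<Longrightarrow> \<exists>R. \<forall>x y. x \<ge> R \<longrightarrow> y \<ge> R \<longrightarrow> dist (F x) (F y) < e"
  shows "\<exists>L. (F \<longlongrightarrow> L) at_top"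
proof -
  have "cauchy_filter (filtermap F at_top)"
    unfolding cauchy_filter_metric_filtermap
  proof (intro allI impI)
    fix e :: real assume "e > 0"
    then obtain R where R: "\<forall>x y. x \<ge> R \<longrightarrow> y \<ge> R \<longrightarrow> dist (F x) (F y) < e" using assms by blast
    show "\<exists>P. eventually P at_top \<and> (\<forall>x y. P x \<and> P y \<longrightarrow> dist (F x) (F y) < e)"
      by (rule exI[of _ "\<lambda>x. x \<ge> R"]) (use R in \<open>auto simp: eventually_ge_at_top\<close>)
  qed
  then have "convergent_filter (filtermap F at_top)" by (rule cauchy_filter_convergent)
  then show ?thesis by (auto simp: convergent_filter_iff filterlim_def)
qed

lemma vdc1:
  fixes \<phi> \<phi>1 \<phi>2 :: "real \<Rightarrow> real"
  assumes ab: "a \<le> b"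
    and d1: "\<And>x. (\<phi> has_real_derivative \<phi>1 x) (at x)"
    and d2: "\<And>x. (\<phi>1 has_real_derivative \<phi>2 x) (at x)"
    and mu: "\<mu> > 0" and lb: "\<And>x. x \<in> {a..b} \<Longrightarrow> \<mu> \<le> \<bar>\<phi>1 x\<bar>"
    and s2: "\<And>x. x \<in> {a..b} \<Longrightarrow> \<phi>2 x \<ge> 0"
  shows "norm (integral {a..b} (\<lambda>x. cis (\<phi> x))) \<le> 4 / \<mu>"
proof -
  have nz: "\<phi>1 x \<noteq> 0" if "x \<in> {a..b}" for x using lb[OF that] mu by auto
  define E where "E x = - \<i> * cis (\<phi> x) / complex_of_real (\<phi>1 x)" for x
  define R where "R x = \<i> * cis (\<phi> x) * complex_of_real (\<phi>2 x / (\<phi>1 x)^2)" for x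
  have dE: "(E has_vector_derivative (cis (\<phi> x) + R x)) (at x within {a..b})" if x: "x \<in> {a..b}" for x
  proof -
    have c: "((\<lambda>x. cis (\<phi> x)) has_vector_derivative (\<i> * cis (\<phi> x) * complex_of_real (\<phi>1 x))) (at x)"
      using has_derivative_cis[OF d1[of x, unfolded has_field_derivative_def]]
      by (simp add: has_vector_derivative_def algebra_simps scaleR_conv_of_real)
    have o: "((\<lambda>x. complex_of_real (\<phi>1 x)) has_vector_derivative complex_of_real (\<phi>2 x)) (at x)"
      using d2[of x] by (simp add: has_vector_derivative_of_real has_real_derivative_iff_has_vector_derivative[symmetric])
    have i: "((\<lambda>x. 1 / \<phi>1 x) has_real_derivative (- \<phi>2 x / (\<phi>1 x)^2)) (at x)"
      using nz[OF x] d2[of x] by (auto intro!: derivative_eq_intros simp: power2_eq_square)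
    have Eeq: "E = (\<lambda>x. (- \<i> * cis (\<phi> x)) * complex_of_real (1 / \<phi>1 x))"
      by (auto simp: E_def divide_inverse of_real_inverse)
    have "(E has_vector_derivative
        ((- \<i> * cis (\<phi> x)) * complex_of_real (- \<phi>2 x / (\<phi>1 x)^2) + (- \<i> * (\<i> * cis (\<phi> x) * complex_of_real (\<phi>1 x))) * complex_of_real (1 / \<phi>1 x))) (at x)"
      unfolding Eeq
      by (rule has_vector_derivative_mult[OF has_vector_derivative_mult_right[OF c] has_vector_derivative_of_real[OF i]])
    moreover have "(- \<i> * cis (\<phi> x)) * complex_of_real (- \<phi>2 x / (\<phi>1 x)^2) + (- \<i> * (\<i> * cis (\<phi> x) * complex_of_real (\<phi>1 x))) * complex_of_real (1 / \<phi>1 x)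
       = cis (\<phi> x) + R x"
      using nz[OF x] by (simp add: R_def field_simps power2_eq_square)
    ultimately show ?thesis by (auto intro: has_vector_derivative_at_within)
  qed
  have FT: "((\<lambda>x. cis (\<phi> x) + R x) has_integral (E b - E a)) {a..b}"
    by (rule fundamental_theorem_of_calculus[OF ab]) (use dE in auto)
  have contc: "continuous_on {a..b} (\<lambda>x. cis (\<phi> x))"
    using d1 by (intro continuous_intros) (meson DERIV_isCont continuous_at_imp_continuous_on)
  have ic: "(\<lambda>x. cis (\<phi> x)) integrable_on {a..b}"
    by (rule integrable_continuous_interval[OF contc])
  have iR: "R integrable_on {a..b}"
    using integrable_diff[OF has_integral_integrable[OF FT] ic] by simp
  have eq: "integral {a..b} (\<lambda>x. cis (\<phi> x)) = (E b - E a) - integral {a..b} R"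
    using integral_unique[OF FT] integral_add[OF ic iR] by (simp add: eq_diff_eq)
  have dinv: "((\<lambda>x. - 1 / \<phi>1 x) has_vector_derivative (\<phi>2 x / (\<phi>1 x)^2)) (at x within {a..b})"
    if x: "x \<in> {a..b}" for x
  proof -
    have "((\<lambda>x. - 1 / \<phi>1 x) has_real_derivative (\<phi>2 x / (\<phi>1 x)^2)) (at x)"
      using nz[OF x] d2[of x] by (auto intro!: derivative_eq_intros simp: power2_eq_square)
    then show ?thesis
      by (simp add: has_real_derivative_iff_has_vector_derivative has_vector_derivative_at_within)
  qed
  have FT2: "((\<lambda>x. \<phi>2 x / (\<phi>1 x)^2) has_integral (- 1 / \<phi>1 b - (- 1 / \<phi>1 a))) {a..b}"
    by (rule fundamental_theorem_of_calculus[OF ab]) (use dinv in auto)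
  have nR: "norm (integral {a..b} R) \<le> integral {a..b} (\<lambda>x. \<phi>2 x / (\<phi>1 x)^2)"
    by (rule integral_norm_bound_integral[OF iR has_integral_integrable[OF FT2]])
       (use s2 in \<open>simp add: R_def norm_mult norm_divide norm_power\<close>)
  have "integral {a..b} (\<lambda>x. \<phi>2 x / (\<phi>1 x)^2) = 1 / \<phi>1 a - 1 / \<phi>1 b"
    using integral_unique[OF FT2] by simp
  also have "\<dots> \<le> 2 / \<mu>"
  proof -
    have a: "a \<in> {a..b}" and b: "b \<in> {a..b}" using ab by auto
    have "\<bar>1 / \<phi>1 a\<bar> \<le> 1/\<mu>" "\<bar>1 / \<phi>1 b\<bar> \<le> 1/\<mu>"
      using lb[OF a] lb[OF b] mu by (auto simp: abs_div field_simps)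
    then show ?thesis by linarith
  qed
  finally have nR2: "norm (integral {a..b} R) \<le> 2 / \<mu>" using nR by linarith
  have nE: "norm (E x) \<le> 1 / \<mu>" if "x \<in> {a..b}" for x
    using lb[OF that] mu nz[OF that] by (simp add: E_def norm_divide norm_mult field_simps)
  have "norm (integral {a..b} (\<lambda>x. cis (\<phi> x))) \<le> norm (E b) + norm (E a) + norm (integral {a..b} R)"
    unfolding eq by (smt (verit) norm_triangle_ineq4)
  also have "\<dots> \<le> 1/\<mu> + 1/\<mu> + 2/\<mu>"
    using nE[of a] nE[of b] nR2 ab by (intro add_mono) auto
  finally show ?thesis by simp
qed

lemma mono_deriv:
  fixes f f' :: "real \<Rightarrow> real"
  assumes d: "\<And>x. (f has_real_derivative f' x) (at x)" and ab: "a \<le> b"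
    and nn: "\<And>x. a \<le> x \<Longrightarrow> x \<le> b \<Longrightarrow> f' x \<ge> 0"
  shows "f a \<le> f b"
proof (rule DERIV_nonneg_imp_increasing_open[OF ab])
  show "\<exists>y. (f has_real_derivative y) (at x) \<and> 0 \<le> y" if "a < x" "x < b" for x
    using d nn that by (intro exI[of _ "f' x"]) auto
  show "continuous_on {a..b} f"
    using d by (meson DERIV_isCont continuous_at_imp_continuous_on)
qed

lemma int_len_bound:
  fixes \<phi> :: "real \<Rightarrow> real"
  assumes "p \<le> q" and c: "continuous_on {p..q} \<phi>"
  shows "norm (integral {p..q} (\<lambda>x. cis (\<phi> x))) \<le> q - p"
proof -
  have i: "(\<lambda>x. cis (\<phi> x)) integrable_on {p..q}"
    by (rule integrable_continuous_interval) (intro continuous_intros c)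
  have "norm (integral {p..q} (\<lambda>x. cis (\<phi> x))) \<le> integral {p..q} (\<lambda>x. 1::real)"
    by (rule integral_norm_bound_integral[OF i]) auto
  then show ?thesis using assms by simp
qed

lemma vdc_piece:
  fixes \<phi> \<phi>1 \<phi>2 :: "real \<Rightarrow> real"
  assumes ab: "a \<le> b"
    and d1: "\<And>x. (\<phi> has_real_derivative \<phi>1 x) (at x)"
    and d2: "\<And>x. (\<phi>1 has_real_derivative \<phi>2 x) (at x)"
    and s2: "\<And>x. x \<in> {a..b} \<Longrightarrow> \<phi>2 x \<ge> 0"
    and mu: "\<mu> > 0" and L: "L \<ge> 0"
    and sub: "\<And>u v. a \<le> u \<Longrightarrow> u \<le> v \<Longrightarrow> v \<le> b \<Longrightarrow> \<phi>1 v - \<phi>1 u \<le> 2 * \<mu> \<Longrightarrow> v - u \<le> L"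
  shows "norm (integral {a..b} (\<lambda>x. cis (\<phi> x))) \<le> 8 / \<mu> + L"
proof -
  have mono: "\<phi>1 x \<le> \<phi>1 y" if "a \<le> x" "x \<le> y" "y \<le> b" for x y
    by (rule mono_deriv[OF d2 that(2)]) (use s2 that in auto)
  have cphi: "continuous_on S \<phi>" for S
    using d1 by (meson DERIV_isCont continuous_at_imp_continuous_on)
  have cphi1: "continuous_on S \<phi>1" for S
    using d2 by (meson DERIV_isCont continuous_at_imp_continuous_on)
  have int: "(\<lambda>x. cis (\<phi> x)) integrable_on {p..q}" for p q
    by (rule integrable_continuous_interval) (intro continuous_intros cphi)
  have v1: "norm (integral {p..q} (\<lambda>x. cis (\<phi> x))) \<le> 4 / \<mu>"
    if "a \<le> p" "p \<le> q" "q \<le> b" "\<And>x. x \<in> {p..q} \<Longrightarrow> \<mu> \<le> \<bar>\<phi>1 x\<bar>" for p q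
    by (rule vdc1[OF that(2) d1 d2 mu that(4)]) (use s2 that in auto)
  have pos: "0 < 4 / \<mu>" using mu by simp
  consider "\<phi>1 a \<ge> \<mu>" | "\<phi>1 b \<le> - \<mu>" | "\<phi>1 a < \<mu>" "\<phi>1 b > - \<mu>" by linarith
  then show ?thesis
  proof cases
    case 1
    have "norm (integral {a..b} (\<lambda>x. cis (\<phi> x))) \<le> 4 / \<mu>"
      by (rule v1) (use ab 1 mono in \<open>auto, fastforce\<close>)
    then show ?thesis using L pos by linarith
  next
    case 2
    have "norm (integral {a..b} (\<lambda>x. cis (\<phi> x))) \<le> 4 / \<mu>"
      by (rule v1) (use ab 2 mono in \<open>auto, smt (verit) atLeastAtMost_iff\<close>)
    then show ?thesis using L pos by linarith
  next
    case 3
    obtain u where u: "a \<le> u" "u \<le> b" "- \<mu> \<le> \<phi>1 u" "\<phi>1 u < \<mu>"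
        "norm (integral {a..u} (\<lambda>x. cis (\<phi> x))) \<le> 4 / \<mu>"
    proof (cases "\<phi>1 a \<ge> - \<mu>")
      case True
      then show ?thesis using that[of a] ab 3 pos by auto
    next
      case False
      obtain u where u: "a \<le> u" "u \<le> b" "\<phi>1 u = - \<mu>"
        using IVT'[of \<phi>1 a "-\<mu>" b, OF _ _ ab cphi1] False 3 by auto
      have "norm (integral {a..u} (\<lambda>x. cis (\<phi> x))) \<le> 4 / \<mu>"
      proof (rule v1)
        show "\<mu> \<le> \<bar>\<phi>1 x\<bar>" if "x \<in> {a..u}" for x
          using mono[of x u] u that by auto
      qed (use u in auto)
      then show ?thesis using that[of u] u mu by auto
    qed
    obtain v where v: "u \<le> v" "v \<le> b" "\<phi>1 v \<le> \<mu>"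
        "norm (integral {v..b} (\<lambda>x. cis (\<phi> x))) \<le> 4 / \<mu>"
    proof (cases "\<phi>1 b \<le> \<mu>")
      case True
      then show ?thesis using that[of b] u pos by auto
    next
      case False
      obtain v where v: "u \<le> v" "v \<le> b" "\<phi>1 v = \<mu>"
        using IVT'[of \<phi>1 u "\<mu>" b, OF _ _ u(2) cphi1] False u by auto
      have "norm (integral {v..b} (\<lambda>x. cis (\<phi> x))) \<le> 4 / \<mu>"
      proof (rule v1)
        show "\<mu> \<le> \<bar>\<phi>1 x\<bar>" if "x \<in> {v..b}" for x
          using mono[of v x] u v that by auto
      qed (use u v in auto)
      then show ?thesis using that[of v] v by auto
    qed
    have m: "norm (integral {u..v} (\<lambda>x. cis (\<phi> x))) \<le> L"
    proof -
      have "v - u \<le> L" by (rule sub) (use u v in auto)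
      then show ?thesis using int_len_bound[OF v(1) cphi] by linarith
    qed
    have "integral {a..b} (\<lambda>x. cis (\<phi> x)) = integral {a..u} (\<lambda>x. cis (\<phi> x)) +
        (integral {u..v} (\<lambda>x. cis (\<phi> x)) + integral {v..b} (\<lambda>x. cis (\<phi> x)))"
      using Henstock_Kurzweil_Integration.integral_combine[OF u(1) order_trans[OF v(1) v(2)] int] Henstock_Kurzweil_Integration.integral_combine[OF v(1) v(2) int]
      by simp
    then have "norm (integral {a..b} (\<lambda>x. cis (\<phi> x))) \<le> norm (integral {a..u} (\<lambda>x. cis (\<phi> x))) +
        (norm (integral {u..v} (\<lambda>x. cis (\<phi> x))) + norm (integral {v..b} (\<lambda>x. cis (\<phi> x))))"
      by (metis norm_triangle_ineq add_left_mono order_trans)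
    then show ?thesis using u(5) v(4) m by simp
  qed
qed

lemma root_step:
  fixes d m t :: real and k :: nat
  assumes k: "k > 0" and m: "m > 0" and t: "t > 0" and d: "d \<ge> 0"
    and h: "t * (m * d ^ k) \<le> 2 * t powr (1 / real (k+1))"
  shows "d \<le> (2/m) powr (1 / real k) * t powr (- 1 / real (k+1))"
proof -
  define L where "L = (2/m) powr (1 / real k) * t powr (- 1 / real (k+1))"
  have L0: "L \<ge> 0" unfolding L_def by simp
  have "L ^ k = ((2/m) powr (1 / real k)) ^ k * (t powr (- 1 / real (k+1))) ^ k"
    unfolding L_def by (simp add: power_mult_distrib)
  also have "\<dots> = (2/m) * t powr (- real k / real (k+1))"
    using k m t by (simp add: powr_power)
  finally have Lk: "L ^ k = (2/m) * t powr (- real k / real (k+1))" .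
  have "t powr (1 / real (k+1)) = t * t powr (- real k / real (k+1))"
  proof -
    have e: "1 / real (k+1) = 1 + (- real k / real (k+1))" by (simp add: field_simps)
    have "t powr (1 / real (k+1)) = t powr (1 + (- real k / real (k+1)))" by (subst e) (rule refl)
    also have "\<dots> = t powr 1 * t powr (- real k / real (k+1))" by (rule powr_add)
    finally show ?thesis using t by simp
  qed
  with h have "t * (m * d ^ k) \<le> t * (2 * t powr (- real k / real (k+1)))" by simp
  then have "m * d ^ k \<le> 2 * t powr (- real k / real (k+1))" using t by simp
  then have "d ^ k \<le> L ^ k" unfolding Lk using m by (simp add: field_simps)
  moreover obtain j where "k = Suc j" using k by (cases k) auto
  ultimately show ?thesis using power_le_imp_le_base L0 unfolding L_def by blast
qed

lemma piece_inc:
  fixes g g1 g2 :: "real \<Rightarrow> real" and k :: nat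
  assumes d1: "\<And>x. (g has_real_derivative g1 x) (at x)"
    and d2: "\<And>x. (g1 has_real_derivative g2 x) (at x)"
    and ab: "a \<le> b" and m: "m > 0" and k: "k > 0" and t: "t > 0"
    and s2: "\<And>x. x \<in> {a..b} \<Longrightarrow> g2 x \<ge> 0"
    and inc: "\<And>u v. a \<le> u \<Longrightarrow> u \<le> v \<Longrightarrow> v \<le> b \<Longrightarrow> m * (v - u) ^ k \<le> g1 v - g1 u"
  shows "norm (integral {a..b} (\<lambda>x. cis (t * (g x + c * x)))) \<le> (8 + (2/m) powr (1 / real k)) * t powr (- 1 / real (k+1))"
proof -
  define \<mu> where "\<mu> = t powr (1 / real (k+1))"
  define L where "L = (2/m) powr (1 / real k) * t powr (- 1 / real (k+1))"
  have mu: "\<mu> > 0" using t by (simp add: \<mu>_def)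
  have "norm (integral {a..b} (\<lambda>x. cis (t * (g x + c * x)))) \<le> 8 / \<mu> + L"
  proof (rule vdc_piece[of a b "\<lambda>x. t * (g x + c * x)" "\<lambda>x. t * (g1 x + c)" "\<lambda>x. t * g2 x" \<mu> L, OF ab])
    show "((\<lambda>x. t * (g x + c * x)) has_real_derivative t * (g1 x + c)) (at x)" for x
      using d1[of x] by (auto intro!: derivative_eq_intros)
    show "((\<lambda>x. t * (g1 x + c)) has_real_derivative t * g2 x) (at x)" for x
      using d2[of x] by (auto intro!: derivative_eq_intros)
    show "t * g2 x \<ge> 0" if "x \<in> {a..b}" for x using s2[OF that] t by simp
    show "L \<ge> 0" unfolding L_def by simp
    show "v - u \<le> L" if "a \<le> u" "u \<le> v" "v \<le> b" "t * (g1 v + c) - t * (g1 u + c) \<le> 2 * \<mu>" for u v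
    proof -
      have "t * (m * (v-u)^k) \<le> t * (g1 v - g1 u)" using inc[OF that(1-3)] t by simp
      also have "\<dots> \<le> 2 * t powr (1 / real (k+1))" using that(4) unfolding \<mu>_def by (simp add: algebra_simps)
      finally have h: "t * (m * (v-u)^k) \<le> 2 * t powr (1 / real (k+1))" .
      show ?thesis unfolding L_def by (rule root_step[OF k m t _ h]) (use that in simp)
    qed
  qed (use mu in auto)
  also have "8 / \<mu> = 8 * t powr (- 1 / real (k+1))"
    unfolding \<mu>_def using t by (simp add: powr_minus_divide divide_inverse powr_minus)
  finally show ?thesis unfolding L_def by (simp add: algebra_simps)
qed

lemma piece_dec:
  fixes g g1 g2 :: "real \<Rightarrow> real" and k :: nat
  assumes d1: "\<And>x. (g has_real_derivative g1 x) (at x)"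
    and d2: "\<And>x. (g1 has_real_derivative g2 x) (at x)"
    and ab: "a \<le> b" and m: "m > 0" and k: "k > 0" and t: "t > 0"
    and s2: "\<And>x. x \<in> {a..b} \<Longrightarrow> g2 x \<le> 0"
    and dec: "\<And>u v. a \<le> u \<Longrightarrow> u \<le> v \<Longrightarrow> v \<le> b \<Longrightarrow> m * (v - u) ^ k \<le> g1 u - g1 v"
  shows "norm (integral {a..b} (\<lambda>x. cis (t * (g x + c * x)))) \<le> (8 + (2/m) powr (1 / real k)) * t powr (- 1 / real (k+1))"
proof -
  have "norm (integral {a..b} (\<lambda>x. cis (t * ((\<lambda>x. - g x) x + (-c) * x)))) \<le> (8 + (2/m) powr (1 / real k)) * t powr (- 1 / real (k+1))"
  proof (rule piece_inc[of "\<lambda>x. - g x" "\<lambda>x. - g1 x" "\<lambda>x. - g2 x" a b m k t, OF _ _ ab m k t])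
    show "((\<lambda>x. - g x) has_real_derivative - g1 x) (at x)" for x using d1[of x] by (auto intro!: derivative_eq_intros)
    show "((\<lambda>x. - g1 x) has_real_derivative - g2 x) (at x)" for x using d2[of x] by (auto intro!: derivative_eq_intros)
  qed (use s2 dec in auto)
  moreover have "integral {a..b} (\<lambda>x. cis (t * ((\<lambda>x. - g x) x + (-c) * x))) = cnj (integral {a..b} (\<lambda>x. cis (t * (g x + c * x))))"
    unfolding integral_cnj cis_cnj by (simp add: algebra_simps)
  ultimately show ?thesis by simp
qed



definition qf :: "real \<Rightarrow> real \<Rightarrow> real" where "qf \<beta> x = 1 - \<beta>*x^2 + x^4"
definition gf :: "real \<Rightarrow> real \<Rightarrow> real" where "gf \<beta> x = x * sqrt (qf \<beta> x)"
definition g1f :: "real \<Rightarrow> real \<Rightarrow> real" where "g1f \<beta> x = (1 - 2*\<beta>*x^2 + 3*x^4) / sqrt (qf \<beta> x)"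
definition Mf :: "real \<Rightarrow> real \<Rightarrow> real" where "Mf \<beta> y = -3*\<beta> + (2*\<beta>^2+10)*y - 9*\<beta>*y^2 + 6*y^3"
definition g2f :: "real \<Rightarrow> real \<Rightarrow> real" where "g2f \<beta> x = x * Mf \<beta> (x^2) / (sqrt (qf \<beta> x))^3"

lemma qf_pos: assumes "\<beta> < 2" shows "qf \<beta> x > 0"
proof (cases "\<beta> \<le> 0")
  case True
  have "\<beta> * x^2 \<le> 0" using True by (simp add: mult_nonpos_nonneg)
  moreover have "x^4 \<ge> 0" by simp
  ultimately show ?thesis unfolding qf_def by linarith
next
  case False
  have "qf \<beta> x = (x^2 - \<beta>/2)^2 + (1 - \<beta>^2/4)" unfolding qf_def by (simp add: power2_eq_square power4_eq_xxxx algebra_simps)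
  moreover have "\<beta>^2 < 4"
  proof -
    have "\<beta>^2 < 2^2" using False assms by (intro power_strict_mono) auto
    then show ?thesis by simp
  qed
  moreover have "(x^2 - \<beta>/2)^2 \<ge> 0" by simp
  ultimately show ?thesis by linarith
qed

lemma d_sq: assumes "\<beta> < 2"
  shows "((\<lambda>x. sqrt (qf \<beta> x)) has_real_derivative ((- \<beta> * x + 2 * x^3) / sqrt (qf \<beta> x))) (at x)"
proof -
  have q: "qf \<beta> x > 0" using qf_pos[OF assms] .
  have dq: "(qf \<beta> has_real_derivative (- 2 * \<beta> * x + 4 * x^3)) (at x)"
    unfolding qf_def[abs_def] by (auto intro!: derivative_eq_intros simp: power2_eq_square power3_eq_cube)
  have "((\<lambda>x. sqrt (qf \<beta> x)) has_real_derivative (inverse (sqrt (qf \<beta> x)) / 2 * (- 2 * \<beta> * x + 4 * x^3))) (at x)"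
    by (rule DERIV_chain2[OF DERIV_real_sqrt[OF q] dq])
  moreover have "inverse (sqrt (qf \<beta> x)) / 2 * (- 2 * \<beta> * x + 4 * x^3) = (- \<beta> * x + 2 * x^3) / sqrt (qf \<beta> x)"
    using q by (simp add: field_simps)
  ultimately show ?thesis by (rule DERIV_cong)
qed

lemma frac_helper1:
  fixes s q A B :: real
  assumes "s > 0" "s * s = q"
  shows "1 * s + B / s * x = (q + x * B) / s"
proof -
  have "1 * s + B / s * x = (s * s + x * B) / s" using assms(1) by (simp add: field_simps)
  then show ?thesis using assms(2) by simp
qed

lemma frac_helper2:
  fixes s q A B P :: real
  assumes "s > 0" "s * s = q"
  shows "(A * s - P * (B / s)) / (s * s) = (A * q - P * B) / s^3"
proof -
  have "A * s - P * (B / s) = (A * (s * s) - P * B) / s" using assms(1) by (simp add: field_simps)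
  then have "(A * s - P * (B / s)) / (s * s) = ((A * q - P * B) / s) / (s * s)" using assms(2) by simp
  also have "\<dots> = (A * q - P * B) / s^3" by (simp add: power3_eq_cube)
  finally show ?thesis .
qed

lemma d_gf: assumes "\<beta> < 2" shows "(gf \<beta> has_real_derivative g1f \<beta> x) (at x)"
proof -
  have q: "qf \<beta> x > 0" using qf_pos[OF assms] .
  define s where "s = sqrt (qf \<beta> x)"
  have s: "s > 0" "s * s = qf \<beta> x" using q by (auto simp: s_def)
  have "((\<lambda>x. x * sqrt (qf \<beta> x)) has_real_derivative (1 * s + ((- \<beta> * x + 2 * x^3) / s) * x)) (at x)"
    unfolding s_def by (rule DERIV_mult[OF DERIV_ident d_sq[OF assms]])
  moreover have "1 * s + ((- \<beta> * x + 2 * x^3) / s) * x = g1f \<beta> x"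
  proof -
    have p: "qf \<beta> x + x * (- \<beta> * x + 2 * x^3) = 1 - 2*\<beta>*x^2 + 3*x^4"
      unfolding qf_def by (simp add: algebra_simps power2_eq_square power3_eq_cube power4_eq_xxxx)
    have "1 * s + ((- \<beta> * x + 2 * x^3) / s) * x = (qf \<beta> x + x * (- \<beta> * x + 2 * x^3)) / s"
      by (rule frac_helper1[OF s])
    also have "\<dots> = g1f \<beta> x" unfolding p g1f_def s_def ..
    finally show ?thesis .
  qed
  ultimately show ?thesis unfolding gf_def[abs_def] by (rule DERIV_cong)
qed

lemma d_g1f: assumes "\<beta> < 2" shows "(g1f \<beta> has_real_derivative g2f \<beta> x) (at x)"
proof -
  have q: "qf \<beta> x > 0" using qf_pos[OF assms] .
  define s where "s = sqrt (qf \<beta> x)"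
  have s: "s > 0" "s * s = qf \<beta> x" using q by (auto simp: s_def)
  have dP: "((\<lambda>x. 1 - 2*\<beta>*x^2 + 3*x^4) has_real_derivative (- 4 * \<beta> * x + 12 * x^3)) (at x)"
    by (auto intro!: derivative_eq_intros simp: power2_eq_square power3_eq_cube)
  have "((\<lambda>x. (1 - 2*\<beta>*x^2 + 3*x^4) / sqrt (qf \<beta> x)) has_real_derivative
      ((- 4 * \<beta> * x + 12 * x^3) * s - (1 - 2*\<beta>*x^2 + 3*x^4) * ((- \<beta> * x + 2 * x^3) / s)) / (s * s)) (at x)"
    unfolding s_def by (rule DERIV_divide[OF dP d_sq[OF assms]]) (use q in simp)
  moreover have "((- 4 * \<beta> * x + 12 * x^3) * s - (1 - 2*\<beta>*x^2 + 3*x^4) * ((- \<beta> * x + 2 * x^3) / s)) / (s * s) = g2f \<beta> x"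
  proof -
    have p: "(- 4 * \<beta> * x + 12 * x^3) * qf \<beta> x - (1 - 2*\<beta>*x^2 + 3*x^4) * (- \<beta> * x + 2 * x^3) = x * Mf \<beta> (x^2)"
      unfolding qf_def Mf_def by (simp add: algebra_simps power2_eq_square power3_eq_cube power4_eq_xxxx)
    have "((- 4 * \<beta> * x + 12 * x^3) * s - (1 - 2*\<beta>*x^2 + 3*x^4) * ((- \<beta> * x + 2 * x^3) / s)) / (s * s)
      = ((- 4 * \<beta> * x + 12 * x^3) * qf \<beta> x - (1 - 2*\<beta>*x^2 + 3*x^4) * (- \<beta> * x + 2 * x^3)) / s^3"
      by (rule frac_helper2[OF s])
    also have "\<dots> = g2f \<beta> x" unfolding p g2f_def s_def ..
    finally show ?thesis .
  qed
  ultimately show ?thesis unfolding g1f_def[abs_def] by (rule DERIV_cong)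
qed



lemma incr_a:
  fixes h1 h2 :: "real \<Rightarrow> real"
  assumes d: "\<And>x. (h1 has_real_derivative h2 x) (at x)" and uv: "u \<le> v" and m: "m \<ge> 0"
    and lb: "\<And>x. u \<le> x \<Longrightarrow> x \<le> v \<Longrightarrow> h2 x \<ge> m * (x - u)^j"
  shows "m * (v - u)^(Suc j) / real (Suc j) \<le> h1 v - h1 u"
proof -
  define G where "G x = h1 x - m * (x - u)^(Suc j) / real (Suc j)" for x
  have dG: "(G has_real_derivative (h2 x - m * (x - u)^j)) (at x)" for x
    unfolding G_def[abs_def] using d[of x]
    by (auto intro!: derivative_eq_intros simp del: power_Suc)
  have "G u \<le> G v" by (rule mono_deriv[OF dG uv]) (use lb in auto)
  then show ?thesis unfolding G_def by simp
qed

lemma incr_b: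
  fixes h1 h2 :: "real \<Rightarrow> real"
  assumes d: "\<And>x. (h1 has_real_derivative h2 x) (at x)" and uv: "u \<le> v" and m: "m \<ge> 0"
    and lb: "\<And>x. u \<le> x \<Longrightarrow> x \<le> v \<Longrightarrow> h2 x \<ge> m * (v - x)^j"
  shows "m * (v - u)^(Suc j) / real (Suc j) \<le> h1 v - h1 u"
proof -
  define G where "G x = h1 x + m * (v - x)^(Suc j) / real (Suc j)" for x
  have dG: "(G has_real_derivative (h2 x - m * (v - x)^j)) (at x)" for x
    unfolding G_def[abs_def] using d[of x]
    by (auto intro!: derivative_eq_intros simp del: power_Suc)
  have "G u \<le> G v" by (rule mono_deriv[OF dG uv]) (use lb in auto)
  then show ?thesis unfolding G_def by simp
qed



definition NB :: "real \<Rightarrow> nat \<Rightarrow> real \<Rightarrow> real" where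
  "NB m k t = (8 + (2/m) powr (1 / real k)) * t powr (- 1 / real (k+1))"

lemma NB_nonneg: "NB m k t \<ge> 0"
  unfolding NB_def by (intro mult_nonneg_nonneg) (auto intro: add_nonneg_nonneg)

lemma piece_I:
  assumes \<beta>: "\<beta> < 2" and pq: "p \<le> q" and m: "m > 0" and t: "t > 0"
    and lb: "\<And>x. p \<le> x \<Longrightarrow> x \<le> q \<Longrightarrow> g2f \<beta> x \<ge> m * (x - p)^j"
    and b: "p \<le> b" "b \<le> q"
  shows "norm (integral {p..b} (\<lambda>x. cis (t * (gf \<beta> x + c * x)))) \<le> NB (m / real (Suc j)) (Suc j) t"
  unfolding NB_def
proof (rule piece_inc[OF d_gf[OF \<beta>] d_g1f[OF \<beta>] b(1) _ _ t])
  show "m / real (Suc j) > 0" using m by simp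
  show "0 < Suc j" by simp
  show "g2f \<beta> x \<ge> 0" if "x \<in> {p..b}" for x
    using lb[of x] that b m by (smt (verit) atLeastAtMost_iff mult_nonneg_nonneg zero_le_power)
  show "m / real (Suc j) * (v - u) ^ Suc j \<le> g1f \<beta> v - g1f \<beta> u"
    if "p \<le> u" "u \<le> v" "v \<le> b" for u v
  proof -
    have "m * (v - u)^(Suc j) / real (Suc j) \<le> g1f \<beta> v - g1f \<beta> u"
    proof (rule incr_a[OF d_g1f[OF \<beta>] that(2)])
      show "m \<ge> 0" using m by simp
      show "g2f \<beta> x \<ge> m * (x - u)^j" if "u \<le> x" "x \<le> v" for x
      proof -
        have "m * (x - u)^j \<le> m * (x - p)^j"
          using that \<open>p \<le> u\<close> m by (intro mult_left_mono power_mono) auto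
        also have "\<dots> \<le> g2f \<beta> x" using lb[of x] that \<open>p \<le> u\<close> \<open>v \<le> b\<close> b by auto
        finally show ?thesis .
      qed
    qed
    then show ?thesis by simp
  qed
qed

lemma piece_D1:
  assumes \<beta>: "\<beta> < 2" and pq: "p \<le> q" and m: "m > 0" and t: "t > 0"
    and lb: "\<And>x. p \<le> x \<Longrightarrow> x \<le> q \<Longrightarrow> - g2f \<beta> x \<ge> m * (x - p)^j"
    and b: "p \<le> b" "b \<le> q"
  shows "norm (integral {p..b} (\<lambda>x. cis (t * (gf \<beta> x + c * x)))) \<le> NB (m / real (Suc j)) (Suc j) t"
  unfolding NB_def
proof (rule piece_dec[OF d_gf[OF \<beta>] d_g1f[OF \<beta>] b(1) _ _ t])
  show "m / real (Suc j) > 0" using m by simp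
  show "0 < Suc j" by simp
  show "g2f \<beta> x \<le> 0" if "x \<in> {p..b}" for x
    using lb[of x] that b m by (smt (verit) atLeastAtMost_iff mult_nonneg_nonneg zero_le_power)
  show "m / real (Suc j) * (v - u) ^ Suc j \<le> g1f \<beta> u - g1f \<beta> v"
    if "p \<le> u" "u \<le> v" "v \<le> b" for u v
  proof -
    have d: "((\<lambda>x. - g1f \<beta> x) has_real_derivative - g2f \<beta> x) (at x)" for x
      using d_g1f[OF \<beta>, of x] by (auto intro!: derivative_eq_intros)
    have "m * (v - u)^(Suc j) / real (Suc j) \<le> (- g1f \<beta> v) - (- g1f \<beta> u)"
    proof (rule incr_a[OF d that(2)])
      show "m \<ge> 0" using m by simp
      show "- g2f \<beta> x \<ge> m * (x - u)^j" if "u \<le> x" "x \<le> v" for x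
      proof -
        have "m * (x - u)^j \<le> m * (x - p)^j"
          using that \<open>p \<le> u\<close> m by (intro mult_left_mono power_mono) auto
        also have "\<dots> \<le> - g2f \<beta> x" using lb[of x] that \<open>p \<le> u\<close> \<open>v \<le> b\<close> b by auto
        finally show ?thesis .
      qed
    qed
    then show ?thesis by simp
  qed
qed

lemma piece_D2:
  assumes \<beta>: "\<beta> < 2" and pq: "p \<le> q" and m: "m > 0" and t: "t > 0"
    and lb: "\<And>x. p \<le> x \<Longrightarrow> x \<le> q \<Longrightarrow> - g2f \<beta> x \<ge> m * (q - x)^j"
    and b: "p \<le> b" "b \<le> q"
  shows "norm (integral {p..b} (\<lambda>x. cis (t * (gf \<beta> x + c * x)))) \<le> NB (m / real (Suc j)) (Suc j) t"
  unfolding NB_def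
proof (rule piece_dec[OF d_gf[OF \<beta>] d_g1f[OF \<beta>] b(1) _ _ t])
  show "m / real (Suc j) > 0" using m by simp
  show "0 < Suc j" by simp
  show "g2f \<beta> x \<le> 0" if "x \<in> {p..b}" for x
    using lb[of x] that b m by (smt (verit) atLeastAtMost_iff mult_nonneg_nonneg zero_le_power)
  show "m / real (Suc j) * (v - u) ^ Suc j \<le> g1f \<beta> u - g1f \<beta> v"
    if "p \<le> u" "u \<le> v" "v \<le> b" for u v
  proof -
    have d: "((\<lambda>x. - g1f \<beta> x) has_real_derivative - g2f \<beta> x) (at x)" for x
      using d_g1f[OF \<beta>, of x] by (auto intro!: derivative_eq_intros)
    have "m * (v - u)^(Suc j) / real (Suc j) \<le> (- g1f \<beta> v) - (- g1f \<beta> u)"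
    proof (rule incr_b[OF d that(2)])
      show "m \<ge> 0" using m by simp
      show "- g2f \<beta> x \<ge> m * (v - x)^j" if "u \<le> x" "x \<le> v" for x
      proof -
        have "m * (v - x)^j \<le> m * (q - x)^j"
          using that \<open>v \<le> b\<close> b m by (intro mult_left_mono power_mono) auto
        also have "\<dots> \<le> - g2f \<beta> x" using lb[of x] that \<open>p \<le> u\<close> \<open>v \<le> b\<close> b by auto
        finally show ?thesis .
      qed
    qed
    then show ?thesis by simp
  qed
qed

lemma chain:
  fixes f :: "real \<Rightarrow> complex"
  assumes int: "\<And>a b. f integrable_on {a..b}"
    and X: "\<And>b. 0 \<le> b \<Longrightarrow> b \<le> p \<Longrightarrow> norm (integral {0..b} f) \<le> X"
    and Y: "\<And>b. p \<le> b \<Longrightarrow> b \<le> q \<Longrightarrow> norm (integral {p..b} f) \<le> Y"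
    and p: "0 \<le> p" and Y0: "Y \<ge> 0"
    and b: "0 \<le> b" "b \<le> q"
  shows "norm (integral {0..b} f) \<le> X + Y"
proof (cases "b \<le> p")
  case True then show ?thesis using X[OF b(1)] Y0 by simp
next
  case False
  then have "integral {0..b} f = integral {0..p} f + integral {p..b} f"
    using Henstock_Kurzweil_Integration.integral_combine[OF p _ int] by simp
  then have "norm (integral {0..b} f) \<le> norm (integral {0..p} f) + norm (integral {p..b} f)"
    by (simp add: norm_triangle_ineq)
  also have "\<dots> \<le> X + Y" using X[OF p order_refl] Y[of b] False b by (intro add_mono) auto
  finally show ?thesis .
qed



definition Dc :: "real \<Rightarrow> real" where "Dc \<beta> = (1 + \<bar>\<beta>\<bar>)^3"

lemma Dc_pos: "Dc \<beta> > 0" unfolding Dc_def by (simp add: add_pos_nonneg)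

lemma s3_bound:
  assumes "\<beta> < 2"
  shows "sqrt (qf \<beta> x)^3 > 0" "sqrt (qf \<beta> x)^3 \<le> Dc \<beta> * (1 + x^2)^3"
proof -
  show "sqrt (qf \<beta> x)^3 > 0" using qf_pos[OF assms] by simp
  define K where "K = 1 + \<bar>\<beta>\<bar>"
  have K1: "K \<ge> 1" unfolding K_def by simp
  have "qf \<beta> x \<le> (K * (1 + x^2))^2"
  proof -
    have x2: "x^2 \<ge> 0" "x^4 \<ge> 0" by auto
    have "- \<beta> * x^2 \<le> \<bar>\<beta>\<bar> * x^2" using x2 by (intro mult_right_mono) auto
    also have "\<dots> \<le> K * x^2" unfolding K_def using x2 by (intro mult_right_mono) auto
    finally have a: "- \<beta> * x^2 \<le> K * x^2" .
    have KK: "K \<le> K^2" using K1 by (simp add: power2_eq_square)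
    have "K * x^2 \<le> K^2 * x^2" using KK x2 by (intro mult_right_mono) auto
    also have "\<dots> \<le> K^2 * (2 * x^2)" using x2 by (intro mult_left_mono) auto
    finally have "K * x^2 \<le> K^2 * (2 * x^2)" .
    moreover have "x^4 \<le> K^2 * x^4" using K1 x2 by (simp add: mult_le_cancel_right1 one_le_power)
    moreover have "1 \<le> K^2" using K1 by (simp add: one_le_power)
    moreover have "(K * (1 + x^2))^2 = K^2 + K^2 * (2 * x^2) + K^2 * x^4"
      by (simp add: power2_eq_square power4_eq_xxxx algebra_simps)
    ultimately show ?thesis unfolding qf_def using a by linarith
  qed
  then have "sqrt (qf \<beta> x) \<le> K * (1 + x^2)"
  proof -
    have "sqrt (qf \<beta> x) \<le> sqrt ((K * (1 + x^2))^2)" using \<open>qf \<beta> x \<le> _\<close> by (rule real_sqrt_le_mono)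
    also have "\<dots> = K * (1 + x^2)" using K1 by (simp add: real_sqrt_abs)
    finally show ?thesis .
  qed
  then have "sqrt (qf \<beta> x)^3 \<le> (K * (1 + x^2))^3" using qf_pos[OF assms, of x] by (intro power_mono) auto
  then show "sqrt (qf \<beta> x)^3 \<le> Dc \<beta> * (1 + x^2)^3" unfolding Dc_def K_def by (simp add: power_mult_distrib)
qed

lemma g2_ge:
  assumes \<beta>: "\<beta> < 2" and x: "x \<ge> 0" and M: "Mf \<beta> (x^2) \<ge> 0"
  shows "g2f \<beta> x \<ge> x * Mf \<beta> (x^2) / (Dc \<beta> * (1 + x^2)^3)"
proof -
  have p1: "Dc \<beta> * (1 + x^2)^3 > 0" using Dc_pos[of \<beta>] by (simp add: add_pos_nonneg)
  have c: "x * Mf \<beta> (x^2) \<ge> 0" using x M by simp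
  show ?thesis unfolding g2f_def
    by (rule divide_left_mono[OF s3_bound(2)[OF \<beta>] c mult_pos_pos[OF p1 s3_bound(1)[OF \<beta>]]])
qed

lemma g2_le:
  assumes \<beta>: "\<beta> < 2" and x: "x \<ge> 0" and M: "Mf \<beta> (x^2) \<le> 0"
  shows "- g2f \<beta> x \<ge> x * (- Mf \<beta> (x^2)) / (Dc \<beta> * (1 + x^2)^3)"
proof -
  have p1: "Dc \<beta> * (1 + x^2)^3 > 0" using Dc_pos[of \<beta>] by (simp add: add_pos_nonneg)
  have c: "x * (- Mf \<beta> (x^2)) \<ge> 0" using x M by (simp add: mult_nonneg_nonpos)
  have "x * (- Mf \<beta> (x^2)) / (Dc \<beta> * (1 + x^2)^3) \<le> x * (- Mf \<beta> (x^2)) / sqrt (qf \<beta> x)^3"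
    by (rule divide_left_mono[OF s3_bound(2)[OF \<beta>] c mult_pos_pos[OF p1 s3_bound(1)[OF \<beta>]]])
  then show ?thesis unfolding g2f_def by simp
qed

lemma cube_le_125: assumes "0 \<le> x" "x \<le> 2" shows "(1 + x^2)^3 \<le> (125::real)"
proof -
  have "x^2 \<le> 2^2" using assms by (intro power_mono) auto
  then have "1 + x^2 \<le> 5" by simp
  then have "(1 + x^2)^3 \<le> 5^3" by (intro power_mono) auto
  then show ?thesis by simp
qed

lemma g2_ge_c:
  assumes \<beta>: "\<beta> < 2" and x: "0 \<le> x" "x \<le> 2" and M: "Mf \<beta> (x^2) \<ge> 0"
  shows "g2f \<beta> x \<ge> x * Mf \<beta> (x^2) / (125 * Dc \<beta>)"
proof -
  have p1: "Dc \<beta> * (1 + x^2)^3 > 0" using Dc_pos[of \<beta>] by (simp add: add_pos_nonneg)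
  have p2: "125 * Dc \<beta> > 0" using Dc_pos[of \<beta>] by simp
  have c: "x * Mf \<beta> (x^2) \<ge> 0" using x M by simp
  have le: "Dc \<beta> * (1 + x^2)^3 \<le> 125 * Dc \<beta>"
    using cube_le_125[OF x] Dc_pos[of \<beta>] by (simp add: mult.commute)
  have "x * Mf \<beta> (x^2) / (125 * Dc \<beta>) \<le> x * Mf \<beta> (x^2) / (Dc \<beta> * (1 + x^2)^3)"
    by (rule divide_left_mono[OF le c mult_pos_pos[OF p2 p1]])
  then show ?thesis using g2_ge[OF \<beta> x(1) M] by linarith
qed

lemma g2_le_c:
  assumes \<beta>: "\<beta> < 2" and x: "0 \<le> x" "x \<le> 2" and M: "Mf \<beta> (x^2) \<le> 0"
  shows "- g2f \<beta> x \<ge> x * (- Mf \<beta> (x^2)) / (125 * Dc \<beta>)"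
proof -
  have p1: "Dc \<beta> * (1 + x^2)^3 > 0" using Dc_pos[of \<beta>] by (simp add: add_pos_nonneg)
  have p2: "125 * Dc \<beta> > 0" using Dc_pos[of \<beta>] by simp
  have c: "x * (- Mf \<beta> (x^2)) \<ge> 0" using x M by (simp add: mult_nonneg_nonpos)
  have le: "Dc \<beta> * (1 + x^2)^3 \<le> 125 * Dc \<beta>"
    using cube_le_125[OF x] Dc_pos[of \<beta>] by (simp add: mult.commute)
  have "x * (- Mf \<beta> (x^2)) / (125 * Dc \<beta>) \<le> x * (- Mf \<beta> (x^2)) / (Dc \<beta> * (1 + x^2)^3)"
    by (rule divide_left_mono[OF le c mult_pos_pos[OF p2 p1]])
  then show ?thesis using g2_le[OF \<beta> x(1) M] by linarith
qed

lemma M_tail: assumes "\<beta> < 2" "y \<ge> 4" shows "Mf \<beta> y \<ge> y^3"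
proof (cases "\<beta> \<ge> 0")
  case True
  have y0: "y \<ge> 0" using assms by simp
  have a: "9 * \<beta> * y^2 \<le> 18 * y^2" using assms True by (intro mult_right_mono) auto
  have b: "18 * y^2 \<le> 4.5 * y^3"
  proof -
    have "18 * y^2 = y^2 * 18" by simp
    also have "\<dots> \<le> y^2 * (4.5 * y)" using assms by (intro mult_left_mono) auto
    finally show ?thesis by (simp add: power3_eq_cube power2_eq_square algebra_simps)
  qed
  have c: "(2*\<beta>^2+10)*y \<ge> 10 * y" using y0 by (intro mult_right_mono) auto
  have d: "y^3 \<ge> 0" using y0 by simp
  show ?thesis unfolding Mf_def using a b c d assms by linarith
next
  case False
  have y0: "y \<ge> 0" using assms by simp
  have "- 9 * \<beta> * y^2 \<ge> 0" using False by (simp add: mult_nonpos_nonneg)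
  moreover have "(2*\<beta>^2+10)*y \<ge> 0" using y0 by simp
  moreover have "y^3 \<ge> 0" using y0 by simp
  ultimately show ?thesis unfolding Mf_def using False by linarith
qed

lemma tail_lb:
  assumes \<beta>: "\<beta> < 2" and x: "x \<ge> 2"
  shows "g2f \<beta> x \<ge> (1 / (8 * Dc \<beta>)) * (x - 2)^1"
proof -
  define y where "y = x^2"
  have y4: "y \<ge> 4"
  proof -
    have "2^2 \<le> x^2" by (rule power_mono) (use x in auto)
    then show ?thesis unfolding y_def by simp
  qed
  have M: "Mf \<beta> y \<ge> y^3" using M_tail[OF \<beta> y4] .
  have y3: "y^3 > 0" using y4 by simp
  have D: "Dc \<beta> > 0" by (rule Dc_pos)
  have "g2f \<beta> x \<ge> x * Mf \<beta> y / (Dc \<beta> * (1 + y)^3)"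
    using g2_ge[OF \<beta>, of x] M y3 x unfolding y_def by auto
  moreover have "x * y^3 / (Dc \<beta> * (8 * y^3)) \<le> x * Mf \<beta> y / (Dc \<beta> * (1 + y)^3)"
  proof -
    have "(1 + y)^3 \<le> (2 * y)^3" using y4 by (intro power_mono) auto
    then have "(1+y)^3 \<le> 8 * y^3" by (simp add: power_mult_distrib)
    then have "x * y^3 / (Dc \<beta> * (8 * y^3)) \<le> x * y^3 / (Dc \<beta> * (1 + y)^3)"
      using D y4 x by (intro divide_left_mono mult_left_mono mult_pos_pos) auto
    also have "\<dots> \<le> x * Mf \<beta> y / (Dc \<beta> * (1 + y)^3)"
      using M x D y4 by (intro divide_right_mono mult_left_mono) auto
    finally show ?thesis .
  qed
  moreover have "x * y^3 / (Dc \<beta> * (8 * y^3)) = x / (8 * Dc \<beta>)" using y3 by simp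
  moreover have "(1 / (8 * Dc \<beta>)) * (x - 2)^1 \<le> x / (8 * Dc \<beta>)" using D x by (simp add: divide_right_mono)
  ultimately show ?thesis by linarith
qed



lemma gf_phase_pos: assumes "x \<ge> 0" shows "phase \<beta> x \<alpha> = gf \<beta> x + \<alpha> * x"
proof -
  have "x^2 - \<beta> * x^4 + x^6 = x^2 * qf \<beta> x" unfolding qf_def by (simp add: algebra_simps power2_eq_square power4_eq_xxxx power_def)
  then have "sqrt (x^2 - \<beta> * x^4 + x^6) = x * sqrt (qf \<beta> x)" using assms by (simp add: real_sqrt_mult)
  then show ?thesis unfolding phase_def gf_def by simp
qed

lemma gf_phase_neg: assumes "x \<ge> 0" shows "phase \<beta> (-x) \<alpha> = gf \<beta> x + (-\<alpha>) * x"
proof -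
  have "phase \<beta> (-x) \<alpha> = phase \<beta> x (-\<alpha>)" unfolding phase_def by simp
  then show ?thesis using gf_phase_pos[OF assms] by simp
qed

lemma conv_half:
  assumes \<beta>: "\<beta> < 2" and t: "t > 0"
  shows "\<exists>L. ((\<lambda>B. integral {0..B} (\<lambda>x. cis (t * (gf \<beta> x + c * x)))) \<longlongrightarrow> L) at_top"
proof (rule cauchy_at_top_conv)
  fix e :: real assume e: "e > 0"
  define f where "f = (\<lambda>x. cis (t * (gf \<beta> x + c * x)))"
  have cg: "continuous_on S (gf \<beta>)" for S
    using d_gf[OF \<beta>] by (meson DERIV_isCont continuous_at_imp_continuous_on)
  have int: "f integrable_on {a..b}" for a b
    unfolding f_def by (rule integrable_continuous_interval) (intro continuous_intros cg)
  define m where "m = 1 / (8 * Dc \<beta>)"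
  have m: "m > 0" unfolding m_def using Dc_pos[of \<beta>] by simp
  have g1inc: "m * (v - 2)^2 / 2 \<le> g1f \<beta> v - g1f \<beta> 2" if "2 \<le> v" for v
    using incr_a[OF d_g1f[OF \<beta>] that, of m 1] m tail_lb[OF \<beta>] unfolding m_def by (auto simp: power2_eq_square)
  define R where "R = 3 + (2/m) * (\<bar>g1f \<beta> 2\<bar> + \<bar>c\<bar> + 8 / (t * e))"
  have R3: "R \<ge> 3" unfolding R_def using m t e by (simp add: add_nonneg_nonneg)
  have key: "t * (g1f \<beta> x + c) \<ge> 8 / e" if "x \<ge> R" for x
  proof -
    have x3: "x - 2 \<ge> 1" using R3 that by simp
    have "m * (x - 2) / 2 \<le> m * (x - 2)^2 / 2"
    proof -
      have "x - 2 \<le> (x - 2)^2" using x3 by (simp add: power2_eq_square)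
      then show ?thesis using m by (simp add: divide_right_mono)
    qed
    with g1inc[of x] x3 have a: "g1f \<beta> x \<ge> g1f \<beta> 2 + m * (x - 2) / 2" by simp
    have "m * (x - 2) / 2 \<ge> m * (R - 2) / 2" using that m by (simp add: divide_right_mono)
    also have "m * (R - 2) / 2 \<ge> \<bar>g1f \<beta> 2\<bar> + \<bar>c\<bar> + 8 / (t * e)"
    proof -
      have "m * (R - 2) / 2 = m / 2 + (\<bar>g1f \<beta> 2\<bar> + \<bar>c\<bar> + 8 / (t * e))"
        unfolding R_def using m by (simp add: field_simps)
      then show ?thesis using m by simp
    qed
    finally have "g1f \<beta> x + c \<ge> 8 / (t * e)" using a by linarith
    then have "t * (8 / (t * e)) \<le> t * (g1f \<beta> x + c)" using t by (intro mult_left_mono) auto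
    moreover have "t * (8 / (t * e)) = 8 / e" using t by simp
    ultimately show ?thesis by simp
  qed
  have bnd: "norm (integral {x..y} f) < e" if "R \<le> x" "x \<le> y" for x y
    proof -
      define \<mu> where "\<mu> = t * (g1f \<beta> x + c)"
      have mu: "\<mu> \<ge> 8 / e" using key[OF that(1)] unfolding \<mu>_def .
      have "8 / e > 0" using e by simp
      then have mu0: "\<mu> > 0" using mu by linarith
      have "norm (integral {x..y} f) \<le> 4 / \<mu>" unfolding f_def
      proof (rule vdc1[of x y "\<lambda>x. t * (gf \<beta> x + c * x)" "\<lambda>x. t * (g1f \<beta> x + c)" "\<lambda>x. t * g2f \<beta> x" \<mu>, OF that(2)])
        show "((\<lambda>x. t * (gf \<beta> x + c * x)) has_real_derivative t * (g1f \<beta> z + c)) (at z)" for z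
          using d_gf[OF \<beta>, of z] by (auto intro!: derivative_eq_intros)
        show "((\<lambda>x. t * (g1f \<beta> x + c)) has_real_derivative t * g2f \<beta> z) (at z)" for z
          using d_g1f[OF \<beta>, of z] by (auto intro!: derivative_eq_intros)
        show "0 \<le> t * g2f \<beta> z" if "z \<in> {x..y}" for z
        proof -
          have "z \<ge> 2" using that R3 \<open>R \<le> x\<close> by auto
          moreover have "(1 / (8 * Dc \<beta>)) * (z - 2)^1 \<ge> 0" using \<open>z \<ge> 2\<close> Dc_pos[of \<beta>] by simp
          ultimately have "g2f \<beta> z \<ge> 0" using tail_lb[OF \<beta>, of z] by linarith
          then show ?thesis using t by simp
        qed
        show "\<mu> \<le> \<bar>t * (g1f \<beta> z + c)\<bar>" if "z \<in> {x..y}" for z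
        proof -
          have "g1f \<beta> x \<le> g1f \<beta> z"
          proof (rule mono_deriv[OF d_g1f[OF \<beta>]])
            show "x \<le> z" using that by auto
            show "0 \<le> g2f \<beta> w" if "x \<le> w" "w \<le> z" for w
            proof -
              have "w \<ge> 2" using that R3 \<open>R \<le> x\<close> by auto
              moreover have "(1 / (8 * Dc \<beta>)) * (w - 2)^1 \<ge> 0" using \<open>w \<ge> 2\<close> Dc_pos[of \<beta>] by simp
              ultimately show ?thesis using tail_lb[OF \<beta>, of w] by linarith
            qed
          qed
          then have "\<mu> \<le> t * (g1f \<beta> z + c)" unfolding \<mu>_def using t by (intro mult_left_mono) auto
          then show ?thesis using mu0 by linarith
        qed
      qed (use mu0 in auto)
      also have "4 / \<mu> \<le> 4 / (8 / e)" using mu mu0 e by (intro divide_left_mono) auto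
      also have "\<dots> < e" using e by simp
      finally show ?thesis .
    qed
  have "\<forall>x y. R \<le> x \<longrightarrow> R \<le> y \<longrightarrow> dist (integral {0..x} f) (integral {0..y} f) < e"
  proof (intro allI impI)
    fix x y assume "R \<le> x" "R \<le> y"
    have x0: "0 \<le> x" "0 \<le> y" using R3 \<open>R \<le> x\<close> \<open>R \<le> y\<close> by auto
    show "dist (integral {0..x} f) (integral {0..y} f) < e"
    proof (cases "x \<le> y")
      case True
      have "integral {0..y} f = integral {0..x} f + integral {x..y} f"
        using Henstock_Kurzweil_Integration.integral_combine[OF x0(1) True int] by simp
      then show ?thesis using bnd[OF \<open>R \<le> x\<close> True] by (simp add: dist_norm norm_minus_commute)
    next
      case False
      have "integral {0..x} f = integral {0..y} f + integral {y..x} f"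
        using Henstock_Kurzweil_Integration.integral_combine[OF x0(2) _ int] False by simp
      then show ?thesis using bnd[OF \<open>R \<le> y\<close>] False by (simp add: dist_norm)
    qed
  qed
  then show "\<exists>R. \<forall>x y. R \<le> x \<longrightarrow> R \<le> y \<longrightarrow> dist (integral {0..x} (\<lambda>x. cis (t * (gf \<beta> x + c * x)))) (integral {0..y} (\<lambda>x. cis (t * (gf \<beta> x + c * x)))) < e"
    unfolding f_def by blast
qed



lemma assemble:
  assumes \<beta>: "\<beta> < 2" and t: "t > 0"
    and K: "\<And>c B. B \<ge> 0 \<Longrightarrow> norm (integral {0..B} (\<lambda>x. cis (t * (gf \<beta> x + c * x)))) \<le> K"
  shows "\<exists>I. has_improper_integral_R (\<lambda>\<xi>. cis (t * phase \<beta> \<xi> \<alpha>)) I \<and> norm I \<le> 2 * K"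
proof -
  define f where "f = (\<lambda>\<xi>. cis (t * phase \<beta> \<xi> \<alpha>))"
  define Fp where "Fp = (\<lambda>B. integral {0..B} (\<lambda>x. cis (t * (gf \<beta> x + \<alpha> * x))))"
  define Fm where "Fm = (\<lambda>B. integral {0..B} (\<lambda>x. cis (t * (gf \<beta> x + (-\<alpha>) * x))))"
  obtain Lp where Lp: "(Fp \<longlongrightarrow> Lp) at_top" using conv_half[OF \<beta> t, of \<alpha>] unfolding Fp_def by blast
  obtain Lm where Lm: "(Fm \<longlongrightarrow> Lm) at_top" using conv_half[OF \<beta> t, of "-\<alpha>"] unfolding Fm_def by blast
  have int: "f integrable_on {a..b}" for a b
    unfolding f_def phase_def by (rule integrable_continuous_interval) (intro continuous_intros)
  have e1: "integral {0..b} f = Fp b" if "b \<ge> 0" for b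
    unfolding Fp_def f_def by (rule integral_cong) (simp add: gf_phase_pos)
  have e2: "integral {a..0} f = Fm (-a)" if "a \<le> 0" for a
  proof -
    have "integral {a..0} f = integral {-0..-a} (\<lambda>x. f (-x))"
      by (rule Henstock_Kurzweil_Integration.integral_reflect_real[symmetric])
    also have "\<dots> = Fm (-a)" unfolding Fm_def f_def minus_zero
      by (rule integral_cong) (simp add: gf_phase_neg)
    finally show ?thesis .
  qed
  have ev: "eventually (\<lambda>p. Fm (- fst p) + Fp (snd p) = (case p of (a, b) \<Rightarrow> integral {a..b} f)) (at_bot \<times>\<^sub>F at_top)"
    unfolding eventually_prod_filter
  proof (intro exI conjI)
    show "eventually (\<lambda>a::real. a \<le> 0) at_bot" by (rule eventually_le_at_bot)
    show "eventually (\<lambda>b::real. b \<ge> 0) at_top" by (rule eventually_ge_at_top)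
    show "\<forall>a b. a \<le> 0 \<longrightarrow> 0 \<le> b \<longrightarrow> Fm (- fst (a, b)) + Fp (snd (a, b)) = (case (a, b) of (a, b) \<Rightarrow> integral {a..b} f)"
    proof (intro allI impI)
      fix a b :: real assume ab: "a \<le> 0" "0 \<le> b"
      have "integral {a..b} f = integral {a..0} f + integral {0..b} f"
        using Henstock_Kurzweil_Integration.integral_combine[OF ab int] by simp
      then show "Fm (- fst (a, b)) + Fp (snd (a, b)) = (case (a, b) of (a, b) \<Rightarrow> integral {a..b} f)"
        using e1[OF ab(2)] e2[OF ab(1)] by simp
    qed
  qed
  have lim1: "((\<lambda>p. Fm (- fst p)) \<longlongrightarrow> Lm) (at_bot \<times>\<^sub>F at_top)"
    by (rule filterlim_compose[OF Lm filterlim_compose[OF filterlim_uminus_at_top_at_bot filterlim_fst]])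
  have lim2: "((\<lambda>p. Fp (snd p)) \<longlongrightarrow> Lp) (at_bot \<times>\<^sub>F at_top)"
    by (rule filterlim_compose[OF Lp filterlim_snd])
  have lim: "((\<lambda>(a, b). integral {a..b} f) \<longlongrightarrow> Lm + Lp) (at_bot \<times>\<^sub>F at_top)"
    using Lim_transform_eventually[OF tendsto_add[OF lim1 lim2] ev] by simp
  have nLp: "norm Lp \<le> K"
    by (rule Lim_norm_ubound[OF _ Lp]) (use K in \<open>auto simp: Fp_def eventually_at_top_linorder\<close>)
  have nLm: "norm Lm \<le> K"
  proof (rule Lim_norm_ubound[OF _ Lm])
    show "eventually (\<lambda>B. norm (Fm B) \<le> K) at_top"
      unfolding eventually_at_top_linorder Fm_def using K[where c="-\<alpha>"] by (intro exI[of _ 0]) auto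
  qed simp
  have "has_improper_integral_R f (Lm + Lp)"
    unfolding has_improper_integral_R_def using int lim by blast
  moreover have "norm (Lm + Lp) \<le> 2 * K" using nLp nLm norm_triangle_ineq[of Lm Lp] by linarith
  ultimately show ?thesis unfolding f_def by blast
qed



lemma NB_2: "NB m (Suc 1) t = (8 + (2/m) powr (1/2)) * t powr (-1/3)"
  unfolding NB_def by simp

lemma NB_4: "NB m (Suc 3) t = (8 + (2/m) powr (1/4)) * t powr (-1/5)"
  unfolding NB_def by simp

lemma int_gf: assumes "\<beta> < 2" shows "(\<lambda>x. cis (t * (gf \<beta> x + c * x))) integrable_on {a..b}"
proof -
  have cg: "continuous_on S (gf \<beta>)" for S
    using d_gf[OF assms] by (meson DERIV_isCont continuous_at_imp_continuous_on)
  show ?thesis by (rule integrable_continuous_interval) (intro continuous_intros cg)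
qed

lemma full_bound:
  assumes \<beta>: "\<beta> < 2" and t: "t > 0" and X: "X \<ge> 0"
    and comp: "\<And>b. 0 \<le> b \<Longrightarrow> b \<le> 2 \<Longrightarrow> norm (integral {0..b} (\<lambda>x. cis (t * (gf \<beta> x + c * x)))) \<le> X"
    and B: "B \<ge> 0"
  shows "norm (integral {0..B} (\<lambda>x. cis (t * (gf \<beta> x + c * x)))) \<le> X + NB (1 / (8 * Dc \<beta>) / real (Suc 1)) (Suc 1) t"
proof (rule chain[OF int_gf[OF \<beta>] comp _ _ NB_nonneg B])
  show "norm (integral {2..b} (\<lambda>x. cis (t * (gf \<beta> x + c * x)))) \<le> NB (1 / (8 * Dc \<beta>) / real (Suc 1)) (Suc 1) t"
    if "2 \<le> b" "b \<le> max B 2" for b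
  proof (rule piece_I[OF \<beta> _ _ t _ that])
    show "2 \<le> max B 2" by simp
    show "1 / (8 * Dc \<beta>) > 0" using Dc_pos[of \<beta>] by simp
    show "g2f \<beta> x \<ge> 1 / (8 * Dc \<beta>) * (x - 2)^1" if "2 \<le> x" "x \<le> max B 2" for x
      using tail_lb[OF \<beta> that(1)] .
  qed
qed auto

lemma case_neg:
  assumes \<beta>: "\<beta> < 0"
  shows "\<exists>C>0. \<forall>t>0. \<forall>c B. B \<ge> 0 \<longrightarrow> norm (integral {0..B} (\<lambda>x. cis (t * (gf \<beta> x + c * x)))) \<le> C * t powr (-1/3)"
proof -
  have \<beta>2: "\<beta> < 2" using \<beta> by simp
  define m where "m = -3 * \<beta> / (125 * Dc \<beta>)"
  have m: "m > 0" unfolding m_def using \<beta> Dc_pos[of \<beta>] by (simp add: divide_neg_pos)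
  define mt where "mt = 1 / (8 * Dc \<beta>)"
  have mt: "mt > 0" unfolding mt_def using Dc_pos[of \<beta>] by simp
  define C where "C = (8 + (2/(m / real (Suc 1))) powr (1/2)) + (8 + (2/(mt / real (Suc 1))) powr (1/2))"
  have C: "C > 0" unfolding C_def by (simp add: add_pos_nonneg)
  have lb: "g2f \<beta> x \<ge> m * (x - 0)^1" if "0 \<le> x" "x \<le> 2" for x
  proof -
    have M: "Mf \<beta> (x^2) \<ge> -3 * \<beta>"
    proof -
      have "- 9 * \<beta> * (x^2)^2 \<ge> 0" using \<beta> by (simp add: mult_nonpos_nonneg)
      moreover have "(2*\<beta>^2+10) * x^2 \<ge> 0" by simp
      moreover have "(x^2)^3 \<ge> 0" by simp
      ultimately show ?thesis unfolding Mf_def by linarith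
    qed
    have M0: "Mf \<beta> (x^2) \<ge> 0" using M \<beta> by linarith
    have "m * (x - 0)^1 = x * (-3 * \<beta>) / (125 * Dc \<beta>)" unfolding m_def by simp
    also have "\<dots> \<le> x * Mf \<beta> (x^2) / (125 * Dc \<beta>)"
      using M that Dc_pos[of \<beta>] by (intro divide_right_mono mult_left_mono) auto
    also have "\<dots> \<le> g2f \<beta> x" by (rule g2_ge_c[OF \<beta>2 that M0])
    finally show ?thesis .
  qed
  show ?thesis
  proof (intro exI[of _ C] conjI allI impI C)
    fix t c B :: real assume t: "t > 0" and B: "B \<ge> 0"
    have comp: "norm (integral {0..b} (\<lambda>x. cis (t * (gf \<beta> x + c * x)))) \<le> NB (m / real (Suc 1)) (Suc 1) t"
      if "0 \<le> b" "b \<le> 2" for b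
      by (rule piece_I[OF \<beta>2 _ m t lb that]) auto
    have "norm (integral {0..B} (\<lambda>x. cis (t * (gf \<beta> x + c * x)))) \<le> NB (m / real (Suc 1)) (Suc 1) t + NB (mt / real (Suc 1)) (Suc 1) t"
      unfolding mt_def by (rule full_bound[OF \<beta>2 t NB_nonneg comp B])
    also have "\<dots> = C * t powr (-1/3)" unfolding NB_2 C_def by (simp add: algebra_simps)
    finally show "norm (integral {0..B} (\<lambda>x. cis (t * (gf \<beta> x + c * x)))) \<le> C * t powr (-1/3)" .
  qed
qed

lemma case_zero:
  shows "\<exists>C>0. \<forall>t>0. \<forall>c B. B \<ge> 0 \<longrightarrow> norm (integral {0..B} (\<lambda>x. cis (t * (gf 0 x + c * x)))) \<le> C * (t powr (-1/3) + t powr (-1/5))"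
proof -
  have \<beta>2: "(0::real) < 2" by simp
  define m where "m = 10 / (125 * Dc 0)"
  have m: "m > 0" unfolding m_def using Dc_pos[of 0] by simp
  define mt where "mt = 1 / (8 * Dc 0)"
  have mt: "mt > 0" unfolding mt_def using Dc_pos[of 0] by simp
  define c1 where "c1 = 8 + (2/(m / real (Suc 3))) powr (1/4)"
  define c2 where "c2 = 8 + (2/(m / real (Suc 1))) powr (1/2)"
  define c3 where "c3 = 8 + (2/(mt / real (Suc 1))) powr (1/2)"
  define C where "C = c1 + c2 + c3"
  have C: "C > 0" unfolding C_def c1_def c2_def c3_def by (simp add: add_pos_nonneg)
  have Mz: "Mf 0 (x^2) = 10 * x^2 + 6 * x^6" for x :: real
    unfolding Mf_def by (simp add: power_mult[symmetric])
  have lb1: "g2f 0 x \<ge> m * (x - 0)^3" if "0 \<le> x" "x \<le> 2" for x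
  proof -
    have M: "Mf 0 (x^2) \<ge> 10 * x^2" unfolding Mz by simp
    have M0: "Mf 0 (x^2) \<ge> 0" using M by (smt (verit) zero_le_power2)
    have "m * (x - 0)^3 = x * (10 * x^2) / (125 * Dc 0)" unfolding m_def by (simp add: power3_eq_cube power2_eq_square)
    also have "\<dots> \<le> x * Mf 0 (x^2) / (125 * Dc 0)"
      using M that Dc_pos[of 0] by (intro divide_right_mono mult_left_mono) auto
    also have "\<dots> \<le> g2f 0 x" by (rule g2_ge_c[OF \<beta>2 that M0])
    finally show ?thesis .
  qed
  have lb2: "g2f 0 x \<ge> m * (x - 1)^1" if "1 \<le> x" "x \<le> 2" for x
  proof -
    have x0: "0 \<le> x" using that by simp
    have "(x - 1)^1 \<le> (x - 0)^3"
    proof -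
      have "(1::real) \<le> x^3" using that by (simp add: one_le_power)
      moreover have "(x - 1)^1 = x - 1" "(x - 0)^3 = x^3" by simp_all
      ultimately show ?thesis using that by linarith
    qed
    then have "m * (x - 1)^1 \<le> m * (x - 0)^3" using m by (intro mult_left_mono) auto
    also have "\<dots> \<le> g2f 0 x" using lb1[OF x0 that(2)] .
    finally show ?thesis .
  qed
  show ?thesis
  proof (intro exI[of _ C] conjI allI impI C)
    fix t c B :: real assume t: "t > 0" and B: "B \<ge> 0"
    have comp1: "norm (integral {0..b} (\<lambda>x. cis (t * (gf 0 x + c * x)))) \<le> NB (m / real (Suc 3)) (Suc 3) t"
      if "0 \<le> b" "b \<le> 1" for b
      by (rule piece_I[OF \<beta>2 _ m t _ that]) (use lb1 in auto)
    have comp2: "norm (integral {1..b} (\<lambda>x. cis (t * (gf 0 x + c * x)))) \<le> NB (m / real (Suc 1)) (Suc 1) t"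
      if "1 \<le> b" "b \<le> 2" for b
      by (rule piece_I[OF \<beta>2 _ m t _ that]) (use lb2 in auto)
    have comp: "norm (integral {0..b} (\<lambda>x. cis (t * (gf 0 x + c * x)))) \<le> NB (m / real (Suc 3)) (Suc 3) t + NB (m / real (Suc 1)) (Suc 1) t"
      if "0 \<le> b" "b \<le> 2" for b
      by (rule chain[OF int_gf[OF \<beta>2] comp1 comp2 _ NB_nonneg that]) auto
    have "norm (integral {0..B} (\<lambda>x. cis (t * (gf 0 x + c * x)))) \<le> (NB (m / real (Suc 3)) (Suc 3) t + NB (m / real (Suc 1)) (Suc 1) t) + NB (mt / real (Suc 1)) (Suc 1) t"
      unfolding mt_def by (rule full_bound[OF \<beta>2 t _ comp B]) (simp add: NB_nonneg add_nonneg_nonneg)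
    also have "\<dots> = c1 * t powr (-1/5) + (c2 + c3) * t powr (-1/3)"
      unfolding NB_2 NB_4 c1_def c2_def c3_def by (simp add: algebra_simps)
    also have "\<dots> \<le> C * t powr (-1/5) + C * t powr (-1/3)"
    proof (intro add_mono mult_right_mono)
      show "c1 \<le> C" "c2 + c3 \<le> C" unfolding C_def c1_def c2_def c3_def by (simp_all add: add_nonneg_nonneg)
    qed auto
    also have "\<dots> = C * (t powr (-1/3) + t powr (-1/5))" by (simp add: algebra_simps)
    finally show "norm (integral {0..B} (\<lambda>x. cis (t * (gf 0 x + c * x)))) \<le> C * (t powr (-1/3) + t powr (-1/5))" .
  qed
qed



lemma Mf_deriv: "(Mf \<beta> has_real_derivative ((2*\<beta>^2+10) - 18*\<beta>*y + 18*y^2)) (at y)"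
  unfolding Mf_def[abs_def] by (auto intro!: derivative_eq_intros simp: power2_eq_square algebra_simps)

lemma Mf_mono:
  assumes \<beta>: "\<beta> < 2" "0 < \<beta>" and uv: "u \<le> v"
  shows "Mf \<beta> u - (10 - 5*\<beta>^2/2) * u \<le> Mf \<beta> v - (10 - 5*\<beta>^2/2) * v"
proof (rule mono_deriv[of _ "\<lambda>y. ((2*\<beta>^2+10) - 18*\<beta>*y + 18*y^2) - (10 - 5*\<beta>^2/2)", OF _ uv])
  show "((\<lambda>y. Mf \<beta> y - (10 - 5*\<beta>^2/2) * y) has_real_derivative ((2*\<beta>^2+10) - 18*\<beta>*y + 18*y^2) - (10 - 5*\<beta>^2/2)) (at y)" for y
    using Mf_deriv[of \<beta> y] by (auto intro!: derivative_eq_intros)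
  show "0 \<le> ((2*\<beta>^2+10) - 18*\<beta>*y + 18*y^2) - (10 - 5*\<beta>^2/2)" for y
  proof -
    have "((2*\<beta>^2+10) - 18*\<beta>*y + 18*y^2) - (10 - 5*\<beta>^2/2) = 18 * (y - \<beta>/2)^2"
      by (simp add: power2_eq_square algebra_simps)
    then show ?thesis by simp
  qed
qed

lemma root_exists:
  assumes \<beta>: "\<beta> < 2" "0 < \<beta>"
  shows "\<exists>y0. 0 < y0 \<and> y0 < 4 \<and> Mf \<beta> y0 = 0"
proof -
  have M0: "Mf \<beta> 0 < 0" unfolding Mf_def using \<beta> by simp
  have M4: "Mf \<beta> 4 > 0"
  proof -
    have "Mf \<beta> 4 = 8*\<beta>^2 - 147*\<beta> + 424" unfolding Mf_def by (simp add: power2_eq_square)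
    moreover have "8*\<beta>^2 \<ge> 0" by simp
    ultimately show ?thesis using \<beta> by linarith
  qed
  have c: "continuous_on {0..4} (Mf \<beta>)" unfolding Mf_def[abs_def] by (intro continuous_intros)
  obtain y0 where y0: "0 \<le> y0" "y0 \<le> 4" "Mf \<beta> y0 = 0"
    using IVT'[of "Mf \<beta>" 0 0 4, OF _ _ _ c] M0 M4 by auto
  have "y0 \<noteq> 0" using y0 M0 by auto
  moreover have "y0 \<noteq> 4" using y0 M4 by auto
  ultimately show ?thesis using y0 by (intro exI[of _ y0]) auto
qed



lemma case_pos:
  assumes \<beta>: "\<beta> < 2" "0 < \<beta>"
  shows "\<exists>C>0. \<forall>t>0. \<forall>c B. B \<ge> 0 \<longrightarrow> norm (integral {0..B} (\<lambda>x. cis (t * (gf \<beta> x + c * x)))) \<le> C * t powr (-1/3)"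
proof -
  define \<delta> where "\<delta> = 10 - 5*\<beta>^2/2"
  have \<delta>: "\<delta> > 0"
  proof -
    have "\<beta>^2 < 2^2" using \<beta> by (intro power_strict_mono) auto
    then show ?thesis unfolding \<delta>_def by simp
  qed
  obtain y0 where y0: "0 < y0" "y0 < 4" "Mf \<beta> y0 = 0" using root_exists[OF \<beta>] by blast
  define r where "r = sqrt y0"
  have r: "0 < r" "r < 2" "r^2 = y0"
    unfolding r_def using y0 by (auto simp: real_sqrt_less_iff[of y0 4, simplified])
  define D where "D = 125 * Dc \<beta>"
  have D: "D > 0" unfolding D_def using Dc_pos[of \<beta>] by simp
  have Ma: "Mf \<beta> (x^2) \<le> - \<delta> * (r^2 - x^2)" if "0 \<le> x" "x \<le> r" for x
  proof -
    have "x^2 \<le> r^2" using that by (intro power_mono) auto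
    then have "Mf \<beta> (x^2) - \<delta> * x^2 \<le> Mf \<beta> (r^2) - \<delta> * r^2"
      using Mf_mono[OF \<beta>] unfolding \<delta>_def by blast
    then show ?thesis using r y0 by (simp add: algebra_simps)
  qed
  have Mb: "Mf \<beta> (x^2) \<ge> \<delta> * (x^2 - r^2)" if "r \<le> x" for x
  proof -
    have "r^2 \<le> x^2" using that r by (intro power_mono) auto
    then have "Mf \<beta> (r^2) - \<delta> * r^2 \<le> Mf \<beta> (x^2) - \<delta> * x^2"
      using Mf_mono[OF \<beta>] unfolding \<delta>_def by blast
    then show ?thesis using r y0 by (simp add: algebra_simps)
  qed
  define m1 where "m1 = \<delta> * (3/4 * r^2) / D"
  define m2 where "m2 = (r/2) * (\<delta> * r) / D"
  define m3 where "m3 = r * (\<delta> * r) / D"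
  have m1: "m1 > 0" unfolding m1_def using \<delta> r D y0 by simp
  have m2: "m2 > 0" unfolding m2_def using \<delta> r D by simp
  have m3: "m3 > 0" unfolding m3_def using \<delta> r D by simp
  have lb1: "- g2f \<beta> x \<ge> m1 * (x - 0)^1" if "0 \<le> x" "x \<le> r/2" for x
  proof -
    have xr: "x \<le> r" "x \<le> 2" using that r by auto
    have M: "Mf \<beta> (x^2) \<le> 0"
    proof -
      have "x^2 \<le> r^2" using that xr by (intro power_mono) auto
      then have "\<delta> * (r^2 - x^2) \<ge> 0" using \<delta> by simp
      then show ?thesis using Ma[OF that(1) xr(1)] by linarith
    qed
    have "x^2 \<le> (r/2)^2" using that by (intro power_mono) auto
    then have "3/4 * r^2 \<le> r^2 - x^2" by (simp add: power_divide)
    then have "\<delta> * (3/4 * r^2) \<le> \<delta> * (r^2 - x^2)" using \<delta> by (intro mult_left_mono) auto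
    then have "\<delta> * (3/4 * r^2) \<le> - Mf \<beta> (x^2)"
      using Ma[OF that(1) xr(1)] by linarith
    then have "x * (\<delta> * (3/4 * r^2)) \<le> x * (- Mf \<beta> (x^2))" using that by (intro mult_left_mono) auto
    then have "x * (\<delta> * (3/4 * r^2)) / D \<le> x * (- Mf \<beta> (x^2)) / D" using D by (intro divide_right_mono) auto
    moreover have "m1 * (x - 0)^1 = x * (\<delta> * (3/4 * r^2)) / D" unfolding m1_def by simp
    ultimately show ?thesis using g2_le_c[OF \<beta>(1) that(1) xr(2) M] unfolding D_def by linarith
  qed
  have lb2: "- g2f \<beta> x \<ge> m2 * (r - x)^1" if "r/2 \<le> x" "x \<le> r" for x
  proof -
    have x0: "0 \<le> x" "x \<le> 2" using that r by auto
    have M: "Mf \<beta> (x^2) \<le> 0"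
    proof -
      have "x^2 \<le> r^2" using that x0 by (intro power_mono) auto
      then have "\<delta> * (r^2 - x^2) \<ge> 0" using \<delta> by simp
      then show ?thesis using Ma[OF x0(1) that(2)] by linarith
    qed
    have "r * (r - x) \<le> (r + x) * (r - x)" using that x0 by (intro mult_right_mono) auto
    also have "\<dots> = r^2 - x^2" by (simp add: power2_eq_square algebra_simps)
    finally have "\<delta> * (r * (r - x)) \<le> \<delta> * (r^2 - x^2)" using \<delta> by (intro mult_left_mono) auto
    then have a: "\<delta> * r * (r - x) \<le> - Mf \<beta> (x^2)" using Ma[OF x0(1) that(2)] by (simp add: algebra_simps)
    have "(r/2) * (\<delta> * r * (r - x)) \<le> x * (- Mf \<beta> (x^2))"
      using a that \<delta> r by (intro mult_mono) auto
    then have "(r/2) * (\<delta> * r * (r - x)) / D \<le> x * (- Mf \<beta> (x^2)) / D" using D by (intro divide_right_mono) auto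
    moreover have "m2 * (r - x)^1 = (r/2) * (\<delta> * r * (r - x)) / D" unfolding m2_def using D by (simp add: field_simps)
    ultimately show ?thesis using g2_le_c[OF \<beta>(1) x0 M] unfolding D_def by linarith
  qed
  have lb3: "g2f \<beta> x \<ge> m3 * (x - r)^1" if "r \<le> x" "x \<le> 2" for x
  proof -
    have x0: "0 \<le> x" using that r by auto
    have "r * (x - r) \<le> (x + r) * (x - r)" using that x0 by (intro mult_right_mono) auto
    also have "\<dots> = x^2 - r^2" by (simp add: power2_eq_square algebra_simps)
    finally have "\<delta> * (r * (x - r)) \<le> \<delta> * (x^2 - r^2)" using \<delta> by (intro mult_left_mono) auto
    then have a: "\<delta> * r * (x - r) \<le> Mf \<beta> (x^2)" using Mb[OF that(1)] by (simp add: algebra_simps)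
    have M: "Mf \<beta> (x^2) \<ge> 0"
    proof -
      have "\<delta> * r * (x - r) \<ge> 0" using \<delta> r that by simp
      then show ?thesis using a by linarith
    qed
    have "r * (\<delta> * r * (x - r)) \<le> x * Mf \<beta> (x^2)"
      using a that \<delta> r by (intro mult_mono) auto
    then have "r * (\<delta> * r * (x - r)) / D \<le> x * Mf \<beta> (x^2) / D" using D by (intro divide_right_mono) auto
    moreover have "m3 * (x - r)^1 = r * (\<delta> * r * (x - r)) / D" unfolding m3_def by (simp add: algebra_simps)
    ultimately show ?thesis using g2_ge_c[OF \<beta>(1) x0 that(2) M] unfolding D_def by linarith
  qed
  define mt where "mt = 1 / (8 * Dc \<beta>)"
  have mt: "mt > 0" unfolding mt_def using Dc_pos[of \<beta>] by simp
  define C where "C = (8 + (2/(m1 / real (Suc 1))) powr (1/2)) + (8 + (2/(m2 / real (Suc 1))) powr (1/2))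
     + (8 + (2/(m3 / real (Suc 1))) powr (1/2)) + (8 + (2/(mt / real (Suc 1))) powr (1/2))"
  have C: "C > 0" unfolding C_def by (simp add: add_pos_nonneg)
  show ?thesis
  proof (intro exI[of _ C] conjI allI impI C)
    fix t c B :: real assume t: "t > 0" and B: "B \<ge> 0"
    let ?f = "\<lambda>x. cis (t * (gf \<beta> x + c * x))"
    have c1: "norm (integral {0..b} ?f) \<le> NB (m1 / real (Suc 1)) (Suc 1) t" if "0 \<le> b" "b \<le> r/2" for b
      by (rule piece_D1[OF \<beta>(1) _ m1 t _ that]) (use lb1 r in auto)
    have c2: "norm (integral {r/2..b} ?f) \<le> NB (m2 / real (Suc 1)) (Suc 1) t" if "r/2 \<le> b" "b \<le> r" for b
      by (rule piece_D2[OF \<beta>(1) _ m2 t _ that]) (use lb2 r in auto)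
    have c3: "norm (integral {r..b} ?f) \<le> NB (m3 / real (Suc 1)) (Suc 1) t" if "r \<le> b" "b \<le> 2" for b
      by (rule piece_I[OF \<beta>(1) _ m3 t _ that]) (use lb3 r in auto)
    have c12: "norm (integral {0..b} ?f) \<le> NB (m1 / real (Suc 1)) (Suc 1) t + NB (m2 / real (Suc 1)) (Suc 1) t"
      if "0 \<le> b" "b \<le> r" for b
      by (rule chain[OF int_gf[OF \<beta>(1)] c1 c2 _ NB_nonneg that]) (use r in auto)
    have c123: "norm (integral {0..b} ?f) \<le> (NB (m1 / real (Suc 1)) (Suc 1) t + NB (m2 / real (Suc 1)) (Suc 1) t) + NB (m3 / real (Suc 1)) (Suc 1) t"
      if "0 \<le> b" "b \<le> 2" for b
      by (rule chain[OF int_gf[OF \<beta>(1)] c12 c3 _ NB_nonneg that]) (use r in auto)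
    have "norm (integral {0..B} ?f) \<le> ((NB (m1 / real (Suc 1)) (Suc 1) t + NB (m2 / real (Suc 1)) (Suc 1) t) + NB (m3 / real (Suc 1)) (Suc 1) t) + NB (mt / real (Suc 1)) (Suc 1) t"
      unfolding mt_def by (rule full_bound[OF \<beta>(1) t _ c123 B]) (simp add: NB_nonneg add_nonneg_nonneg)
    also have "\<dots> = C * t powr (-1/3)" unfolding NB_2 C_def by (simp add: algebra_simps)
    finally show "norm (integral {0..B} ?f) \<le> C * t powr (-1/3)" .
  qed
qed


theorem mainTheorem9:
  fixes \<beta> :: real
  assumes "\<beta> < 2"
  shows "(\<beta> \<noteq> 0 \<longrightarrow> (\<exists>C>0. \<forall>t>0. \<forall>\<alpha>. \<exists>I.
            has_improper_integral_R (\<lambda>\<xi>. cis (t * phase \<beta> \<xi> \<alpha>)) I \<and>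
            norm I \<le> C * t powr (-1/3)))
       \<and> (\<beta> = 0 \<longrightarrow> (\<exists>C>0. \<forall>t>0. \<forall>\<alpha>. \<exists>I.
            has_improper_integral_R (\<lambda>\<xi>. cis (t * phase \<beta> \<xi> \<alpha>)) I \<and>
            norm I \<le> C * (t powr (-1/3) + t powr (-1/5))))"
proof (intro conjI impI)
  assume nz: "\<beta> \<noteq> 0"
  obtain C where C: "C > 0"
    and H: "\<And>t c B. t > 0 \<Longrightarrow> B \<ge> 0 \<Longrightarrow> norm (integral {0..B} (\<lambda>x. cis (t * (gf \<beta> x + c * x)))) \<le> C * t powr (-1/3)"
  proof (cases "\<beta> < 0")
    case True
    then show ?thesis using case_neg[OF True] that by blast
  next
    case False
    then have "0 < \<beta>" using nz by simp
    then show ?thesis using case_pos[OF assms] that by blast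
  qed
  show "\<exists>C>0. \<forall>t>0. \<forall>\<alpha>. \<exists>I. has_improper_integral_R (\<lambda>\<xi>. cis (t * phase \<beta> \<xi> \<alpha>)) I \<and> norm I \<le> C * t powr (-1/3)"
  proof (intro exI[of _ "2 * C"] conjI allI impI)
    show "2 * C > 0" using C by simp
    fix t \<alpha> :: real assume t: "t > 0"
    obtain I where "has_improper_integral_R (\<lambda>\<xi>. cis (t * phase \<beta> \<xi> \<alpha>)) I" "norm I \<le> 2 * (C * t powr (-1/3))"
      using assemble[OF assms t, of "C * t powr (-1/3)" \<alpha>] H[OF t] by blast
    then show "\<exists>I. has_improper_integral_R (\<lambda>\<xi>. cis (t * phase \<beta> \<xi> \<alpha>)) I \<and> norm I \<le> 2 * C * t powr (-1/3)"
      by (intro exI[of _ I]) (simp add: algebra_simps)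
  qed
next
  assume z: "\<beta> = 0"
  obtain C where C: "C > 0"
    and H: "\<And>t c B. t > 0 \<Longrightarrow> B \<ge> 0 \<Longrightarrow> norm (integral {0..B} (\<lambda>x. cis (t * (gf 0 x + c * x)))) \<le> C * (t powr (-1/3) + t powr (-1/5))"
    using case_zero by blast
  show "\<exists>C>0. \<forall>t>0. \<forall>\<alpha>. \<exists>I. has_improper_integral_R (\<lambda>\<xi>. cis (t * phase \<beta> \<xi> \<alpha>)) I \<and> norm I \<le> C * (t powr (-1/3) + t powr (-1/5))"
  proof (intro exI[of _ "2 * C"] conjI allI impI)
    show "2 * C > 0" using C by simp
    fix t \<alpha> :: real assume t: "t > 0"
    obtain I where "has_improper_integral_R (\<lambda>\<xi>. cis (t * phase 0 \<xi> \<alpha>)) I" "norm I \<le> 2 * (C * (t powr (-1/3) + t powr (-1/5)))"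
      using assemble[of 0 t "C * (t powr (-1/3) + t powr (-1/5))" \<alpha>] H[OF t] t by auto
    then show "\<exists>I. has_improper_integral_R (\<lambda>\<xi>. cis (t * phase \<beta> \<xi> \<alpha>)) I \<and> norm I \<le> 2 * C * (t powr (-1/3) + t powr (-1/5))"
      using z by (intro exI[of _ I]) (simp add: algebra_simps)
  qed
qed

end
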